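(* Let $A\in\mathcal{PM}(n)$ be a poset matrix with row vectors $r_0,\ldots,r_{n-1}$. Then the Boolean row space $\mathsf{Row}_{\mathbb B}(A)=\{\sum_{i\in S} r_i : S\subseteq X_n\}$ (Boolean sums, the empty sum being $\mathbf 0$) equals the set $\mathsf{PV}_n(A)$ of poset vectors of $A$.
   Context: Let $X_n=\{0,1,\ldots,n-1\}$. A naturally labeled (NL) poset on $X_n$ is a partial order $\preceq$ on $X_n$ such that $x\preceq y$ implies $x\le y$ in the usual integer order. Its poset matrix is the $n\times n$ $(0,1)$-matrix $A=(a_{i,j})_{i,j\in X_n}$ with $a_{i,j}=1$ if $j\preceq i$ and $0$ otherwise; $\mathcal{PM}(n)$ is the set of all such matrices. Arithmetic is in the Boolean algebra $\{0,1\}$ ($1+1=1$). For $v\in\{0,1\}^n$ (a row vector), $A^v=\begin{bmatrix}A&\mathbf{0}\\ v&1\end{bmatrix}$, and $v$ is a poset vector of $A$ if $A^v\in\mathcal{PM}(n+1)$; $\mathsf{PV}_n(A)$ is the set of poset vectors of $A$. *)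

theory Defs
  imports Main
begin

text \<open>A square (0,1)-matrix of size n is represented as a Boolean-valued function
  A :: nat => nat => bool, where only entries A i j with i, j < n are meaningful
  (True = 1, False = 0).\<close>

definition poset_matrix :: "nat \<Rightarrow> (nat \<Rightarrow> nat \<Rightarrow> bool) \<Rightarrow> bool" where
  "poset_matrix n A \<longleftrightarrow>
     (\<forall>i<n. A i i) \<and>
     (\<forall>i<n. \<forall>j<n. A i j \<and> A j i \<longrightarrow> i = j) \<and>
     (\<forall>i<n. \<forall>j<n. \<forall>k<n. A i j \<and> A j k \<longrightarrow> A i k) \<and>
     (\<forall>i<n. \<forall>j<n. A i j \<longrightarrow> j \<le> i)"

text \<open>The bordered matrix A^v = [A 0; v 1] of size n+1.\<close>
definition border :: "nat \<Rightarrow> (nat \<Rightarrow> nat \<Rightarrow> bool) \<Rightarrow> (nat \<Rightarrow> bool) \<Rightarrow> (nat \<Rightarrow> nat \<Rightarrow> bool)" where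
  "border n A v = (\<lambda>i j. if i < n then (if j < n then A i j else False)
                         else (if j < n then v j else True))"

definition vec :: "nat \<Rightarrow> (nat \<Rightarrow> bool) set" where
  "vec n = {v. \<forall>j\<ge>n. \<not> v j}"

definition PV :: "nat \<Rightarrow> (nat \<Rightarrow> nat \<Rightarrow> bool) \<Rightarrow> (nat \<Rightarrow> bool) set" where
  "PV n A = {v \<in> vec n. poset_matrix (Suc n) (border n A v)}"

definition row_space :: "nat \<Rightarrow> (nat \<Rightarrow> nat \<Rightarrow> bool) \<Rightarrow> (nat \<Rightarrow> bool) set" where
  "row_space n A = {(\<lambda>j. j < n \<and> (\<exists>i\<in>S. A i j)) | S. S \<subseteq> {..<n}}"

end

theory Submission
  imports Defs
begin

definition dcl :: "nat \<Rightarrow> (nat \<Rightarrow> nat \<Rightarrow> bool) \<Rightarrow> (nat \<Rightarrow> bool) \<Rightarrow> bool" where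
  "dcl n A v \<longleftrightarrow> (\<forall>j<n. \<forall>k<n. v j \<and> A j k \<longrightarrow> v k)"

lemma PV_char:
  assumes P: "poset_matrix n A"
  shows "PV n A = {v \<in> vec n. dcl n A v}"
proof (intro set_eqI iffI)
  fix v assume "v \<in> PV n A"
  hence v: "v \<in> vec n" and pm: "poset_matrix (Suc n) (border n A v)" by (auto simp: PV_def)
  have t: "\<forall>i<Suc n. \<forall>j<Suc n. \<forall>k<Suc n. border n A v i j \<and> border n A v j k \<longrightarrow> border n A v i k"
    using pm unfolding poset_matrix_def by blast
  have "dcl n A v" unfolding dcl_def
  proof (intro allI impI)
    fix j k assume "j < n" "k < n" "v j \<and> A j k"
    have "border n A v n j" "border n A v j k" using \<open>j<n\<close> \<open>k<n\<close> \<open>v j \<and> A j k\<close> by (auto simp: border_def)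
    moreover have "n < Suc n" "j < Suc n" "k < Suc n" using \<open>j<n\<close> \<open>k<n\<close> by auto
    ultimately have "border n A v n k" using t by blast
    thus "v k" using \<open>k<n\<close> by (simp add: border_def)
  qed
  with v show "v \<in> {v \<in> vec n. dcl n A v}" by blast
next
  fix v assume "v \<in> {v \<in> vec n. dcl n A v}"
  hence v: "v \<in> vec n" and cl0: "dcl n A v" by auto
  have cl: "\<And>j k. j < n \<Longrightarrow> k < n \<Longrightarrow> v j \<Longrightarrow> A j k \<Longrightarrow> v k"
    using cl0 unfolding dcl_def by blast
  have r: "\<forall>i<n. A i i" and an: "\<forall>i<n. \<forall>j<n. A i j \<and> A j i \<longrightarrow> i = j"
    and tr: "\<forall>i<n. \<forall>j<n. \<forall>k<n. A i j \<and> A j k \<longrightarrow> A i k"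
    and lo: "\<forall>i<n. \<forall>j<n. A i j \<longrightarrow> j \<le> i"
    using P unfolding poset_matrix_def by blast+
  have "poset_matrix (Suc n) (border n A v)"
    unfolding poset_matrix_def
  proof (intro conjI allI impI)
    fix i assume "i < Suc n" thus "border n A v i i" using r by (simp add: border_def)
  next
    fix i j assume "i < Suc n" "j < Suc n" "border n A v i j \<and> border n A v j i"
    thus "i = j" using an by (auto simp: border_def split: if_splits)
  next
    fix i j k assume "i < Suc n" "j < Suc n" "k < Suc n" "border n A v i j \<and> border n A v j k"
    hence h: "border n A v i j" "border n A v j k" by auto
    show "border n A v i k"
    proof (cases "i < n")
      case True
      hence "j < n" using h(1) by (simp add: border_def split: if_splits)
      hence "k < n" using h(2) by (simp add: border_def split: if_splits)
      have "A i j" "A j k" using h \<open>i<n\<close> \<open>j<n\<close> \<open>k<n\<close> by (simp_all add: border_def)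
      hence "A i k" using tr \<open>i<n\<close> \<open>j<n\<close> \<open>k<n\<close> by blast
      thus ?thesis using \<open>i<n\<close> \<open>k<n\<close> by (simp add: border_def)
    next
      case False
      hence i: "i = n" using \<open>i < Suc n\<close> by simp
      show ?thesis
      proof (cases "j < n")
        case True
        hence "k < n" using h(2) by (simp add: border_def split: if_splits)
        have "v j" "A j k" using h i \<open>j<n\<close> \<open>k<n\<close> by (simp_all add: border_def)
        hence "v k" using cl \<open>j<n\<close> \<open>k<n\<close> by blast
        thus ?thesis using i \<open>k<n\<close> by (simp add: border_def)
      next
        case False
        hence "j = n" using \<open>j < Suc n\<close> by simp
        thus ?thesis using h i by simp
      qed
    qed
  next
    fix i j assume "i < Suc n" "j < Suc n" "border n A v i j"
    thus "j \<le> i" using lo by (auto simp: border_def split: if_splits)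
  qed
  with v show "v \<in> PV n A" unfolding PV_def by blast
qed

theorem theorem2p4:
  fixes n :: nat and A :: "nat \<Rightarrow> nat \<Rightarrow> bool"
  assumes "poset_matrix n A"
  shows "row_space n A = PV n A"
proof -
  have refl: "\<And>i. i<n \<Longrightarrow> A i i"
    using assms unfolding poset_matrix_def by blast
  have tr: "\<And>i j k. i<n \<Longrightarrow> j<n \<Longrightarrow> k<n \<Longrightarrow> A i j \<Longrightarrow> A j k \<Longrightarrow> A i k"
    using assms unfolding poset_matrix_def by blast
  show ?thesis unfolding PV_char[OF assms]
  proof (intro set_eqI iffI)
    fix v assume "v \<in> row_space n A"
    then obtain S where S: "S \<subseteq> {..<n}" and v: "v = (\<lambda>j. j < n \<and> (\<exists>i\<in>S. A i j))"
      unfolding row_space_def by blast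
    have "v \<in> vec n" unfolding v vec_def by simp
    moreover have "dcl n A v" unfolding dcl_def v
    proof (intro allI impI)
      fix j k assume jk: "j < n" "k < n" "(j < n \<and> (\<exists>i\<in>S. A i j)) \<and> A j k"
      then obtain i where "i \<in> S" "A i j" by blast
      hence "i < n" using S by auto
      hence "A i k" using tr jk \<open>A i j\<close> by blast
      thus "k < n \<and> (\<exists>i\<in>S. A i k)" using \<open>i \<in> S\<close> jk by blast
    qed
    ultimately show "v \<in> {v \<in> vec n. dcl n A v}" by blast
  next
    fix v assume "v \<in> {v \<in> vec n. dcl n A v}"
    hence vv: "v \<in> vec n" and cl0: "dcl n A v" by auto
    have cl: "\<And>j k. j < n \<Longrightarrow> k < n \<Longrightarrow> v j \<Longrightarrow> A j k \<Longrightarrow> v k"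
      using cl0 unfolding dcl_def by blast
    have out: "\<And>j. \<not> j < n \<Longrightarrow> \<not> v j" using vv unfolding vec_def by auto
    have "v = (\<lambda>j. j < n \<and> (\<exists>i\<in>{j. j < n \<and> v j}. A i j))"
    proof
      fix j show "v j = (j < n \<and> (\<exists>i\<in>{j. j < n \<and> v j}. A i j))"
      proof (cases "j < n")
        case True
        show ?thesis
        proof
          assume "v j" thus "j < n \<and> (\<exists>i\<in>{j. j < n \<and> v j}. A i j)" using True refl by blast
        next
          assume "j < n \<and> (\<exists>i\<in>{j. j < n \<and> v j}. A i j)"
          then obtain i where "i < n" "v i" "A i j" by blast
          thus "v j" using cl True by blast
        qed
      next
        case False thus ?thesis using out by blast
      qed
    qed
    moreover have "{j. j < n \<and> v j} \<subseteq> {..<n}" by auto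
    ultimately show "v \<in> row_space n A" unfolding row_space_def by blast
  qed
qed

end
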